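(* Let $A=\{a_1,\dots,a_{3k}\}$ be an instance of 3-PARTITION with $a^2$ divisible by $7$, and let $G(A)$ be the bipartite network constructed from $A$ as described in the context. In any division of $G(A)$ with maximal bipartite modularity, none of the stars $X_1,\dots,X_{3k}$ and $Y_1,\dots,Y_{3k}$ is divided (i.e., all vertices of each star lie in a single community).
   Context: An instance of 3-PARTITION is a set of $3k$ positive integers $A=\{a_1,\dots,a_{3k}\}$ such that $a=\sum_{i=1}^{3k}a_i=kb$ and $b/4<a_i<b/2$ for all $i$, for some integer $b$. The bipartite network $G(A)$ (vertices colored red/blue, every edge joining a red and a blue vertex) is built as follows. (1) Construct $k$ complete bipartite networks (bicliques) $K_1,\dots,K_k$, each with $a$ red and $a$ blue vertices. (2) For each $i=1,\dots,3k$ add a red vertex $x_i$ and a blue vertex $y_i$ (element vertices). (3) For each $i$, connect $x_i$ to $a_i$ blue vertices in each of the $k$ bicliques, in such a way that each blue vertex of every biclique is adjacent to exactly one red element vertex; similarly connect $y_i$ to $a_i$ red vertices in each biclique so that each red vertex of every biclique is adjacent to exactly one blue element vertex. (4) For each $i$, add the edge $x_iy_i$. (5) For each $i$, construct a star $X_i$ with one blue internal vertex and $a^2/7$ red leaves, and a star $Y_i$ with one red internal vertex and $a^2/7$ blue leaves. (6) For each $i$, connect $x_i$ to the internal vertex of $X_i$ and $y_i$ to the internal vertex of $Y_i$. A division of the vertex set is a partition into communities. With $m$ the number of edges, Barber's bipartite modularity is $Q_b(\mathcal{C})=\sum_{C\in\mathcal{C}}\left(\frac{m_C}{m}-\frac{R_CB_C}{m^2}\right)$,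 where $m_C$ is the number of edges inside $C$ and $R_C$ (resp. $B_C$) is the sum of degrees of red (resp. blue) vertices in $C$. A division with maximal bipartite modularity is one maximizing $Q_b$ over all divisions. *)

theory Defs
  imports Complex_Main "HOL-Library.Disjoint_Sets"
begin

text \<open>The 3k integers are given as a function as indexed by 0..3k-1 (so repeated
values are allowed, as in a multiset). b is the target sum.\<close>

definition three_partition_instance :: "nat \<Rightarrow> (nat \<Rightarrow> nat) \<Rightarrow> nat \<Rightarrow> bool" where
  "three_partition_instance k as b \<longleftrightarrow>
     (\<forall>i<3*k. as i > 0) \<and>
     (\<Sum>i<3*k. as i) = k * b \<and>
     (\<forall>i<3*k. real b / 4 < real (as i) \<and> real (as i) < real b / 2)"

definition total :: "nat \<Rightarrow> (nat \<Rightarrow> nat) \<Rightarrow> nat" where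
  "total k as = (\<Sum>i<3*k. as i)"

text \<open>A bipartite network is a vertex set V, a red/blue colouring (predicate isred),
and a set of edges given as pairs (red endpoint, blue endpoint).\<close>

definition edges_in :: "('v \<times> 'v) set \<Rightarrow> 'v set \<Rightarrow> nat" where
  "edges_in E C = card {e \<in> E. fst e \<in> C \<and> snd e \<in> C}"

definition degree :: "('v \<times> 'v) set \<Rightarrow> 'v \<Rightarrow> nat" where
  "degree E v = card {e \<in> E. fst e = v \<or> snd e = v}"

definition red_degree_sum :: "('v \<Rightarrow> bool) \<Rightarrow> ('v \<times> 'v) set \<Rightarrow> 'v set \<Rightarrow> nat" where
  "red_degree_sum isred E C = (\<Sum>v\<in>{v\<in>C. isred v}. degree E v)"

definition blue_degree_sum :: "('v \<Rightarrow> bool) \<Rightarrow> ('v \<times> 'v) set \<Rightarrow> 'v set \<Rightarrow> nat" where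
  "blue_degree_sum isred E C = (\<Sum>v\<in>{v\<in>C. \<not> isred v}. degree E v)"

definition bip_modularity :: "('v \<Rightarrow> bool) \<Rightarrow> ('v \<times> 'v) set \<Rightarrow> 'v set set \<Rightarrow> real" where
  "bip_modularity isred E P =
     (\<Sum>C\<in>P. real (edges_in E C) / real (card E)
             - real (red_degree_sum isred E C) * real (blue_degree_sum isred E C) / (real (card E))^2)"

definition is_division :: "'v set \<Rightarrow> 'v set set \<Rightarrow> bool" where
  "is_division V P \<longleftrightarrow> partition_on V P"

definition max_modularity_division :: "'v set \<Rightarrow> ('v \<Rightarrow> bool) \<Rightarrow> ('v \<times> 'v) set \<Rightarrow> 'v set set \<Rightarrow> bool" where
  "max_modularity_division V isred E P \<longleftrightarrow>
     is_division V P \<and> (\<forall>P'. is_division V P' \<longrightarrow> bip_modularity isred E P' \<le> bip_modularity isred E P)"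

text \<open>Vertices: KR t j / KB t j are the red / blue vertex j (j < a) of biclique K_t (t < k);
XE i / YE i are x_i / y_i; XC i (blue) and XL i l (red leaves) form the star X_i;
YC i (red) and YL i l (blue leaves) form the star Y_i; l < a^2/7.\<close>

datatype vtx = KR nat nat | KB nat nat | XE nat | YE nat
  | XC nat | XL nat nat | YC nat | YL nat nat

fun is_red :: "vtx \<Rightarrow> bool" where
  "is_red (KR _ _) = True" | "is_red (KB _ _) = False"
| "is_red (XE _) = True" | "is_red (YE _) = False"
| "is_red (XC _) = False" | "is_red (XL _ _) = True"
| "is_red (YC _) = True" | "is_red (YL _ _) = False"

definition G_vertices :: "nat \<Rightarrow> (nat \<Rightarrow> nat) \<Rightarrow> vtx set" where
  "G_vertices k as = (let a = total k as; s = a^2 div 7 in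
      {KR t j | t j. t < k \<and> j < a} \<union> {KB t j | t j. t < k \<and> j < a}
    \<union> {XE i | i. i < 3*k} \<union> {YE i | i. i < 3*k}
    \<union> {XC i | i. i < 3*k} \<union> {XL i l | i l. i < 3*k \<and> l < s}
    \<union> {YC i | i. i < 3*k} \<union> {YL i l | i l. i < 3*k \<and> l < s})"

text \<open>f t j = index i of the red element vertex x_i adjacent to blue vertex j of biclique t;
g t j = index i of the blue element vertex y_i adjacent to red vertex j of biclique t.\<close>

definition valid_assignment :: "nat \<Rightarrow> (nat \<Rightarrow> nat) \<Rightarrow> (nat \<Rightarrow> nat \<Rightarrow> nat) \<Rightarrow> bool" where
  "valid_assignment k as f \<longleftrightarrow>
     (\<forall>t<k. \<forall>j<total k as. f t j < 3*k) \<and>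
     (\<forall>t<k. \<forall>i<3*k. card {j. j < total k as \<and> f t j = i} = as i)"

definition G_edges :: "nat \<Rightarrow> (nat \<Rightarrow> nat) \<Rightarrow> (nat \<Rightarrow> nat \<Rightarrow> nat) \<Rightarrow> (nat \<Rightarrow> nat \<Rightarrow> nat)
    \<Rightarrow> (vtx \<times> vtx) set" where
  "G_edges k as f g = (let a = total k as; s = a^2 div 7 in
      {(KR t j, KB t j') | t j j'. t < k \<and> j < a \<and> j' < a}
    \<union> {(XE (f t j), KB t j) | t j. t < k \<and> j < a}
    \<union> {(KR t j, YE (g t j)) | t j. t < k \<and> j < a}
    \<union> {(XE i, YE i) | i. i < 3*k}
    \<union> {(XL i l, XC i) | i l. i < 3*k \<and> l < s}
    \<union> {(YC i, YL i l) | i l. i < 3*k \<and> l < s}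
    \<union> {(XE i, XC i) | i. i < 3*k}
    \<union> {(YC i, YE i) | i. i < 3*k})"

definition star_X :: "nat \<Rightarrow> (nat \<Rightarrow> nat) \<Rightarrow> nat \<Rightarrow> vtx set" where
  "star_X k as i = {XC i} \<union> {XL i l | l. l < (total k as)^2 div 7}"

definition star_Y :: "nat \<Rightarrow> (nat \<Rightarrow> nat) \<Rightarrow> nat \<Rightarrow> vtx set" where
  "star_Y k as i = {YC i} \<union> {YL i l | l. l < (total k as)^2 div 7}"

end

theory Submission
  imports Defs
begin

definition pc :: "('v\<times>'v) set \<Rightarrow> ('v\<times>'v \<Rightarrow> 'v) \<Rightarrow> 'v set \<Rightarrow> nat" where
  "pc E p S = card {e\<in>E. p e \<in> S}"

definition qv :: "('v\<Rightarrow>bool) \<Rightarrow> ('v\<times>'v) set \<Rightarrow> 'v set \<Rightarrow> real" where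
  "qv isred E C = real (edges_in E C) / real (card E)
     - real (red_degree_sum isred E C) * real (blue_degree_sum isred E C) / (real (card E))^2"

lemma bip_mod_sum: "bip_modularity isred E P = (\<Sum>C\<in>P. qv isred E C)"
  by (simp add: bip_modularity_def qv_def)

locale bipg = fixes V :: "'v set" and isred :: "'v \<Rightarrow> bool" and E :: "('v\<times>'v) set"
  assumes finV: "finite V" and subE: "E \<subseteq> V \<times> V"
    and bip: "\<forall>e\<in>E. isred (fst e) \<and> \<not> isred (snd e)"
begin

lemma finE: "finite E" using finV subE by (meson finite_SigmaI finite_subset)

lemma red_sum:
  assumes "finite C"
  shows "red_degree_sum isred E C = pc E fst C"
proof -
  have "red_degree_sum isred E C = (\<Sum>v\<in>{v\<in>C. isred v}. card {e\<in>E. fst e = v})"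
    unfolding red_degree_sum_def degree_def
    apply (rule sum.cong[OF refl])
    apply (rule arg_cong[where f=card])
    using bip by auto
  also have "\<dots> = card (\<Union>v\<in>{v\<in>C. isred v}. {e\<in>E. fst e = v})"
    by (rule card_UN_disjoint[symmetric]) (use assms finE in auto)
  also have "(\<Union>v\<in>{v\<in>C. isred v}. {e\<in>E. fst e = v}) = {e\<in>E. fst e \<in> C}"
    using bip by auto
  finally show ?thesis by (simp add: pc_def)
qed

lemma blue_sum:
  assumes "finite C"
  shows "blue_degree_sum isred E C = pc E snd C"
proof -
  have "blue_degree_sum isred E C = (\<Sum>v\<in>{v\<in>C. \<not> isred v}. card {e\<in>E. snd e = v})"
    unfolding blue_degree_sum_def degree_def
    apply (rule sum.cong[OF refl])
    apply (rule arg_cong[where f=card])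
    using bip by auto
  also have "\<dots> = card (\<Union>v\<in>{v\<in>C. \<not> isred v}. {e\<in>E. snd e = v})"
    by (rule card_UN_disjoint[symmetric]) (use assms finE in auto)
  also have "(\<Union>v\<in>{v\<in>C. \<not> isred v}. {e\<in>E. snd e = v}) = {e\<in>E. snd e \<in> C}"
    using bip by auto
  finally show ?thesis by (simp add: pc_def)
qed

lemma qv_pp:
  assumes "finite C" and hp: "(p = fst \<and> p' = snd) \<or> (p = snd \<and> p' = fst)"
  shows "qv isred E C = real (edges_in E C) / real (card E)
     - real (pc E p C) * real (pc E p' C) / (real (card E))^2"
  using hp unfolding qv_def red_sum[OF assms(1)] blue_sum[OF assms(1)] by (auto simp: mult.commute)

lemma edges_pp:
  assumes hp: "(p = fst \<and> p' = snd) \<or> (p = snd \<and> p' = fst)"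
  shows "edges_in E C = card {e\<in>E. p e \<in> C \<and> p' e \<in> C}"
  using hp unfolding edges_in_def by (auto intro: arg_cong[where f=card])

lemma edges_le: fixes p p' :: "'v\<times>'v \<Rightarrow> 'v" assumes hp: "(p = fst \<and> p' = snd) \<or> (p = snd \<and> p' = fst)" shows "edges_in E C \<le> pc E p C"
  unfolding edges_pp[OF hp] pc_def by (rule card_mono) (use finE in auto)

lemma edges_le': fixes p p' :: "'v\<times>'v \<Rightarrow> 'v" assumes hp: "(p = fst \<and> p' = snd) \<or> (p = snd \<and> p' = fst)" shows "edges_in E C \<le> pc E p' C"
  unfolding edges_pp[OF hp] pc_def by (rule card_mono) (use finE in auto)

lemma pc_disj: assumes "D \<inter> D' = {}" shows "pc E p D + pc E p D' \<le> card E"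
proof -
  have "pc E p D + pc E p D' = card ({e\<in>E. p e \<in> D} \<union> {e\<in>E. p e \<in> D'})"
    unfolding pc_def by (rule card_Un_disjoint[symmetric]) (use finE assms in auto)
  also have "\<dots> \<le> card E" by (rule card_mono) (use finE in auto)
  finally show ?thesis .
qed

lemma qv_empty: "qv isred E {} = 0"
  by (simp add: qv_def edges_in_def red_degree_sum_def blue_degree_sum_def)

lemma leaf_same:
  fixes p p' :: "'v\<times>'v \<Rightarrow> 'v"
  assumes P: "partition_on V P"
    and maxP: "\<forall>P'. partition_on V P' \<longrightarrow> bip_modularity isred E P' \<le> bip_modularity isred E P"
    and pos: "partition_on V P0" "bip_modularity isred E P0 > 0"
    and hp: "(p = fst \<and> p' = snd) \<or> (p = snd \<and> p' = fst)"
    and eps: "\<epsilon> \<in> E" "p \<epsilon> = l" "p' \<epsilon> = c" "l \<noteq> c"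
    and leaf: "\<forall>e\<in>E. p e = l \<or> p' e = l \<longrightarrow> e = \<epsilon>"
    and C: "C \<in> P" "c \<in> C" "C' \<in> P" "l \<in> C'"
  shows "C' = C"
proof (rule ccontr)
  assume ne: "C' \<noteq> C"
  define m where "m = real (card E)"
  have mpos: "m > 0" using eps(1) finE unfolding m_def using card_gt_0_iff by fastforce
  have finP: "finite P" using P finV by (metis finite_UnionD partition_onD1)
  have same: "\<And>D D' x. D \<in> P \<Longrightarrow> D' \<in> P \<Longrightarrow> x \<in> D \<Longrightarrow> x \<in> D' \<Longrightarrow> D = D'"
    using P partition_onD2 disjointD by blast
  have lC: "l \<notin> C" using same[OF C(3) C(1) C(4)] ne by blast
  have disjCC: "C \<inter> C' = {}" using same[OF C(1) C(3)] ne by blast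
  have cC': "c \<notin> C'" using same[OF C(3) C(1) _ C(2)] ne by blast
  define q where "q = (\<lambda>D. real (edges_in E D) / m - real (pc E p D) * real (pc E p' D) / m^2)"
  have QQ: "bip_modularity isred E Q = (\<Sum>D\<in>Q. q D)" if "partition_on V Q" for Q
  proof -
    have "finite D" if "D \<in> Q" for D
    proof -
      have "D \<subseteq> V" using partition_onD1[OF \<open>partition_on V Q\<close>] \<open>D \<in> Q\<close> by blast
      then show ?thesis using finV finite_subset by blast
    qed
    moreover have "qv isred E D = q D" if "finite D" for D
      using qv_pp[OF that hp] unfolding q_def m_def by simp
    ultimately show ?thesis unfolding bip_mod_sum by (intro sum.cong) auto
  qed
  have q0: "q {} = 0" by (simp add: q_def edges_in_def pc_def)
  have e1: "edges_in E (insert l C) = edges_in E C + 1"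
  proof -
    have "{e\<in>E. p e \<in> insert l C \<and> p' e \<in> insert l C} = insert \<epsilon> {e\<in>E. p e \<in> C \<and> p' e \<in> C}"
      using leaf eps C lC cC' by blast
    moreover have "\<epsilon> \<notin> {e\<in>E. p e \<in> C \<and> p' e \<in> C}" using eps lC by auto
    ultimately show ?thesis unfolding edges_pp[OF hp] using finE by simp
  qed
  have e2: "edges_in E (C' - {l}) = edges_in E C'"
  proof -
    have "{e\<in>E. p e \<in> C' - {l} \<and> p' e \<in> C' - {l}} = {e\<in>E. p e \<in> C' \<and> p' e \<in> C'}"
      using leaf eps C lC cC' by blast
    then show ?thesis unfolding edges_pp[OF hp] by simp
  qed
  have r1: "pc E p (insert l C) = pc E p C + 1"
  proof -
    have "{e\<in>E. p e \<in> insert l C} = insert \<epsilon> {e\<in>E. p e \<in> C}"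
      using leaf eps C lC cC' by blast
    moreover have "\<epsilon> \<notin> {e\<in>E. p e \<in> C}" using eps lC by auto
    ultimately show ?thesis unfolding pc_def using finE by simp
  qed
  have b1: "pc E p' (insert l C) = pc E p' C"
  proof -
    have "{e\<in>E. p' e \<in> insert l C} = {e\<in>E. p' e \<in> C}"
      using leaf eps C lC cC' by blast
    then show ?thesis unfolding pc_def by simp
  qed
  have r2: "pc E p C' = pc E p (C' - {l}) + 1"
  proof -
    have "{e\<in>E. p e \<in> C'} = insert \<epsilon> {e\<in>E. p e \<in> C' - {l}}"
      using leaf eps C lC cC' by blast
    moreover have "\<epsilon> \<notin> {e\<in>E. p e \<in> C' - {l}}" using eps by auto
    ultimately show ?thesis unfolding pc_def using finE by simp
  qed
  have b2: "pc E p' (C' - {l}) = pc E p' C'"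
  proof -
    have "{e\<in>E. p' e \<in> C' - {l}} = {e\<in>E. p' e \<in> C'}"
      using leaf eps C lC cC' by blast
    then show ?thesis unfolding pc_def by simp
  qed
  define R where "R = P - {C} - {C'}"
  define N where "N = (if C' - {l} = {} then {} else {C' - {l}})"
  define P' where "P' = insert (insert l C) (N \<union> R)"
  have UP: "\<Union>P = V" using partition_onD1[OF P] by simp
  have emp: "{} \<notin> P" using partition_onD3[OF P] .
  have partP': "partition_on V P'"
  proof (rule partition_onI)
    show "\<Union>P' = V"
    proof
      show "\<Union>P' \<subseteq> V" using UP C unfolding P'_def N_def R_def by (auto split: if_splits)
      show "V \<subseteq> \<Union>P'"
      proof
        fix x assume "x \<in> V"
        then obtain D where D: "D \<in> P" "x \<in> D" using UP by blast
        show "x \<in> \<Union>P'"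
        proof (cases "D = C \<or> D = C'")
          case True then show ?thesis using D unfolding P'_def N_def by auto
        next
          case False then show ?thesis using D unfolding P'_def R_def by auto
        qed
      qed
    qed
  next
    fix A1 A2 assume A: "A1 \<in> P'" "A2 \<in> P'" "A1 \<noteq> A2"
    define g where "g = (\<lambda>x. if x = l \<or> x \<in> C then insert l C else if x \<in> C' then C' - {l}
       else (THE D. D \<in> P \<and> x \<in> D))"
    have mem: "A = insert l C \<or> A = C' - {l} \<or> (A \<in> P \<and> A \<noteq> C \<and> A \<noteq> C')" if "A \<in> P'" for A
      using that unfolding P'_def N_def R_def by (auto split: if_splits)
    have gA: "A = g x" if th: "A \<in> P'" "x \<in> A" for A x
    proof -
      consider "A = insert l C" | "A = C' - {l}" | "A \<in> P" "A \<noteq> C" "A \<noteq> C'"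
        using mem[OF th(1)] by blast
      then show ?thesis
      proof cases
        case 1 then show ?thesis using th unfolding g_def by auto
      next
        case 2 then show ?thesis using th lC disjCC unfolding g_def by auto
      next
        case 3
        have "x \<noteq> l" using same[OF 3(1) C(3) th(2)] 3 C(4) by blast
        moreover have "x \<notin> C" using same[OF 3(1) C(1) th(2)] 3 by blast
        moreover have "x \<notin> C'" using same[OF 3(1) C(3) th(2)] 3 by blast
        moreover have "(THE D. D \<in> P \<and> x \<in> D) = A"
          by (rule the_equality) (use 3 th same in blast)+
        ultimately show ?thesis unfolding g_def by simp
      qed
    qed
    show "disjnt A1 A2" unfolding disjnt_def using gA A by blast
  next
    show "{} \<notin> P'" using emp unfolding P'_def N_def R_def by auto
  qed
  have insnot: "insert l C \<notin> N \<union> R"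
    using same C lC unfolding N_def R_def by (auto split: if_splits)
  have finR: "finite R" using finP R_def by simp
  have sumP': "(\<Sum>D\<in>P'. q D) = q (insert l C) + q (C' - {l}) + (\<Sum>D\<in>R. q D)"
  proof (cases "C' - {l} = {}")
    case True
    have z: "q (C' - {l}) = 0" by (subst True) (rule q0)
    have "N = {}" unfolding N_def using True by simp
    then show ?thesis unfolding P'_def using insnot finR z by (simp add: sum.insert)
  next
    case False
    have "C' - {l} \<notin> R" using same C False unfolding R_def by auto
    moreover have N: "N = {C' - {l}}" unfolding N_def using False by simp
    moreover have "insert l C \<noteq> C' - {l}" using insnot N by blast
    ultimately show ?thesis unfolding P'_def using insnot finR N
      by (simp add: sum.insert)
  qed
  have sumP: "(\<Sum>D\<in>P. q D) = q C + q C' + (\<Sum>D\<in>R. q D)"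
  proof -
    have "(\<Sum>D\<in>P. q D) = q C + (\<Sum>D\<in>P - {C}. q D)" using sum.remove[OF finP C(1)] .
    also have "(\<Sum>D\<in>P - {C}. q D) = q C' + (\<Sum>D\<in>R. q D)"
      unfolding R_def using sum.remove[of "P - {C}" C' q] finP C ne by simp
    finally show ?thesis by simp
  qed
  have "bip_modularity isred E P' \<le> bip_modularity isred E P" using maxP partP' by blast
  then have "q (insert l C) + q (C' - {l}) \<le> q C + q C'"
    using sumP sumP' QQ[OF partP'] QQ[OF P] by simp
  moreover have "q (insert l C) + q (C' - {l}) - (q C + q C') = (m - real (pc E p' C) + real (pc E p' C'))/m^2"
    unfolding q_def e1 e2 r1 b1 r2 b2 using mpos by (simp add: field_simps power2_eq_square)
  ultimately have "(m - real (pc E p' C) + real (pc E p' C'))/m^2 \<le> 0" by linarith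
  then have le1: "m - real (pc E p' C) + real (pc E p' C') \<le> 0"
    using mpos by (simp add: divide_le_0_iff)
  have "C \<inter> C' = {}" using same C ne by blast
  then have "pc E p' C + pc E p' C' \<le> card E" by (rule pc_disj)
  then have bC: "pc E p' C = card E" using le1 unfolding m_def by linarith
  have qle: "q D \<le> 0" if D: "D \<in> P" for D
  proof (cases "D = C")
    case True
    have "edges_in E C \<le> pc E p C" by (rule edges_le[OF hp])
    then have "q C = (real (edges_in E C) - real (pc E p C)) / m"
      unfolding q_def bC m_def[symmetric] using mpos by (simp add: field_simps power2_eq_square)
    also have "\<dots> \<le> 0" using \<open>edges_in E C \<le> pc E p C\<close> mpos by (simp add: divide_le_0_iff)
    finally show ?thesis using True by simp
  next
    case False
    have "D \<inter> C = {}" using same C D False by blast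
    then have "pc E p' D + pc E p' C \<le> card E" by (rule pc_disj)
    then have "pc E p' D = 0" using bC by simp
    moreover have "edges_in E D \<le> pc E p' D" by (rule edges_le'[OF hp])
    ultimately show ?thesis unfolding q_def by simp
  qed
  have "bip_modularity isred E P \<le> 0" unfolding QQ[OF P] using qle by (simp add: sum_nonpos)
  moreover have "bip_modularity isred E P0 \<le> bip_modularity isred E P" using maxP pos by blast
  ultimately show False using pos by simp
qed

lemma pos_div:
  assumes eps: "\<epsilon> \<in> E" "fst \<epsilon> = l" "snd \<epsilon> = c"
    and leaf: "\<forall>e\<in>E. fst e = l \<or> snd e = l \<longrightarrow> e = \<epsilon>"
    and e0: "e0 \<in> E" "snd e0 \<noteq> l" "snd e0 \<noteq> c"
  shows "\<exists>P0. partition_on V P0 \<and> bip_modularity isred E P0 > 0"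
proof -
  define S where "S = {l, c}"
  have SV: "S \<subseteq> V" using eps subE unfolding S_def by force
  have e0V: "snd e0 \<in> V - S" using e0 subE unfolding S_def by force
  have SS: "S \<noteq> V - S" using e0V SV by blast
  have part: "partition_on V {S, V - S}"
    by (rule partition_onI) (use SV e0V S_def in \<open>auto simp: disjnt_def\<close>)
  define m where "m = card E"
  define b where "b = card {e\<in>E. snd e \<in> S}"
  have cblue: "\<not> isred c" using bip eps by auto
  have fS: "{e\<in>E. fst e \<in> S} = {\<epsilon>}"
  proof -
    have "fst e \<noteq> c" if "e \<in> E" for e using bip that cblue by auto
    then show ?thesis using leaf eps unfolding S_def by blast
  qed
  have eS: "{e\<in>E. fst e \<in> S \<and> snd e \<in> S} = {\<epsilon>}" using fS eps unfolding S_def by auto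
  have bsub: "{e\<in>E. snd e \<in> S} \<subset> E" using e0 unfolding S_def by auto
  have blt: "b < m" unfolding b_def m_def by (rule psubset_card_mono[OF finE bsub])
  have e2: "{e\<in>E. fst e \<in> V - S \<and> snd e \<in> V - S} = E - {e\<in>E. snd e \<in> S}"
    using fS subE eps unfolding S_def by auto
  have r2: "{e\<in>E. fst e \<in> V - S} = E - {\<epsilon>}" using fS subE by auto
  have b2: "{e\<in>E. snd e \<in> V - S} = E - {e\<in>E. snd e \<in> S}" using subE by auto
  have c_e2: "edges_in E (V - S) = m - b" unfolding edges_in_def e2 m_def b_def
    by (rule card_Diff_subset) (use finE in auto)
  have c_r2: "pc E fst (V - S) = m - 1" unfolding pc_def r2 m_def using eps finE by simp
  have c_b2: "pc E snd (V - S) = m - b" unfolding pc_def b2 m_def b_def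
    by (rule card_Diff_subset) (use finE in auto)
  have c_e1: "edges_in E S = 1" unfolding edges_in_def eS by simp
  have c_r1: "pc E fst S = 1" unfolding pc_def fS by simp
  have c_b1: "pc E snd S = b" unfolding pc_def b_def by simp
  have hp: "(fst = fst \<and> snd = snd) \<or> (fst = snd \<and> snd = fst)" by simp
  have finS: "finite S" "finite (V - S)" using finV S_def by auto
  have m1: "m \<ge> 1" using blt by simp
  have "bip_modularity isred E {S, V - S} = qv isred E S + qv isred E (V - S)"
    unfolding bip_mod_sum using SS by simp
  also have "\<dots> = 2 * (real m - real b) / (real m)^2"
    unfolding qv_pp[OF finS(1) hp] qv_pp[OF finS(2) hp] c_e1 c_r1 c_b1 c_e2 c_r2 c_b2 m_def[symmetric]
    using m1 blt by (simp add: of_nat_diff field_simps power2_eq_square)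
  also have "\<dots> > 0" using blt by simp
  finally show ?thesis using part by blast
qed

end
lemma finV: "finite (G_vertices k as)"
  unfolding G_vertices_def Let_def
  by (simp add: finite_image_set2 finite_image_set)

lemma subE:
  assumes "valid_assignment k as f" "valid_assignment k as g"
  shows "G_edges k as f g \<subseteq> G_vertices k as \<times> G_vertices k as"
  using assms unfolding G_edges_def G_vertices_def Let_def valid_assignment_def by auto

lemma bipE: "\<forall>e\<in>G_edges k as f g. is_red (fst e) \<and> \<not> is_red (snd e)"
  unfolding G_edges_def Let_def by auto

lemma leafX: "\<forall>e\<in>G_edges k as f g. fst e = XL i l \<or> snd e = XL i l \<longrightarrow> e = (XL i l, XC i)"
  unfolding G_edges_def Let_def by auto

lemma leafY: "\<forall>e\<in>G_edges k as f g. snd e = YL i l \<or> fst e = YL i l \<longrightarrow> e = (YC i, YL i l)"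
  unfolding G_edges_def Let_def by auto


theorem lemma3:
  fixes k b :: nat and as :: "nat \<Rightarrow> nat" and f g :: "nat \<Rightarrow> nat \<Rightarrow> nat"
    and P :: "vtx set set"
  assumes "three_partition_instance k as b"
    and "7 dvd (total k as)^2"
    and "valid_assignment k as f"
    and "valid_assignment k as g"
    and "max_modularity_division (G_vertices k as) is_red (G_edges k as f g) P"
  shows "\<forall>i<3*k. (\<exists>C\<in>P. star_X k as i \<subseteq> C) \<and> (\<exists>C\<in>P. star_Y k as i \<subseteq> C)"
proof (intro allI impI)
  let ?V = "G_vertices k as" and ?E = "G_edges k as f g"
  let ?s = "(total k as)^2 div 7"
  interpret bipg ?V is_red ?E
    by unfold_locales (use finV subE[OF assms(3,4)] bipE in auto)
  have P: "partition_on ?V P" and maxP: "\<forall>P'. partition_on ?V P' \<longrightarrow>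
      bip_modularity is_red ?E P' \<le> bip_modularity is_red ?E P"
    using assms(5) unfolding max_modularity_division_def is_division_def by auto
  have UP: "\<Union>P = ?V" using partition_onD1[OF P] by simp
  fix i assume i: "i < 3*k"
  have posd: "\<exists>P0. partition_on ?V P0 \<and> bip_modularity is_red ?E P0 > 0" if "0 < ?s"
  proof (rule pos_div[of "(XL i 0, XC i)" "XL i 0" "XC i" "(XE i, YE i)"])
    show "(XL i 0, XC i) \<in> ?E" using i that unfolding G_edges_def Let_def by auto
    show "(XE i, YE i) \<in> ?E" using i unfolding G_edges_def Let_def by auto
  qed (use leafX in auto)
  have inV: "XC i \<in> ?V" "YC i \<in> ?V" "\<And>l. l < ?s \<Longrightarrow> XL i l \<in> ?V" "\<And>l. l < ?s \<Longrightarrow> YL i l \<in> ?V"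
    using i unfolding G_vertices_def Let_def by auto
  have X: "\<exists>C\<in>P. star_X k as i \<subseteq> C"
  proof -
    obtain C where C: "C \<in> P" "XC i \<in> C" using inV(1) UP by blast
    have "XL i l \<in> C" if l: "l < ?s" for l
    proof -
      obtain C' where C': "C' \<in> P" "XL i l \<in> C'" using inV(3)[OF l] UP by blast
      obtain P0 where P0: "partition_on ?V P0" "bip_modularity is_red ?E P0 > 0" using posd l by auto
      have epsE: "(XL i l, XC i) \<in> ?E" using i l unfolding G_edges_def Let_def by auto
      have "C' = C"
        by (rule leaf_same[OF P maxP P0, of fst snd "(XL i l, XC i)" "XL i l" "XC i"])
           (simp, rule epsE, simp, simp, simp, rule leafX, rule C(1), rule C(2), rule C'(1), rule C'(2))
      then show ?thesis using C' by simp
    qed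
    then have "star_X k as i \<subseteq> C" using C unfolding star_X_def by auto
    then show ?thesis using C by blast
  qed
  have Y: "\<exists>C\<in>P. star_Y k as i \<subseteq> C"
  proof -
    obtain C where C: "C \<in> P" "YC i \<in> C" using inV(2) UP by blast
    have "YL i l \<in> C" if l: "l < ?s" for l
    proof -
      obtain C' where C': "C' \<in> P" "YL i l \<in> C'" using inV(4)[OF l] UP by blast
      obtain P0 where P0: "partition_on ?V P0" "bip_modularity is_red ?E P0 > 0" using posd l by auto
      have epsE: "(YC i, YL i l) \<in> ?E" using i l unfolding G_edges_def Let_def by auto
      have "C' = C"
        by (rule leaf_same[OF P maxP P0, of snd fst "(YC i, YL i l)" "YL i l" "YC i"])
           (simp, rule epsE, simp, simp, simp, rule leafY, rule C(1), rule C(2), rule C'(1), rule C'(2))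
      then show ?thesis using C' by simp
    qed
    then have "star_Y k as i \<subseteq> C" using C unfolding star_Y_def by auto
    then show ?thesis using C by blast
  qed
  show "(\<exists>C\<in>P. star_X k as i \<subseteq> C) \<and> (\<exists>C\<in>P. star_Y k as i \<subseteq> C)" using X Y by blast
qed

end
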